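(* Let $K\ge 2$ be even, $a,b\ge1$ integers, $M\ge0$. For the $(K,a,b)$ coded caching problem for location-based content, $R^\star\ge \dfrac{K}{2}-\dfrac{K}{2(2a+b)}M$.
   Context: For integers $x\le y$, $[x:y]=\{x,x+1,\dots,y\}$ and $[n]=[1:n]$. For integers $c$ and $m\ge1$, $\langle c\rangle_m$ denotes the unique element of $\{1,\dots,m\}$ congruent to $c$ modulo $m$. The $(K,a,b)$ coded caching problem for location-based content: a server has $N=K(a+b)$ files $W_1,\dots,W_N$, each consisting of $B$ independent uniformly distributed bits. There are $K$ cache nodes, each storing $MB$ bits, and $K$ users, user $k$ having free access to cache node $k$ only. For $k\in[K]$ define $\mathcal D_{k,1}=[(k-1)(a+b)+1:ka+(k-1)b]$, $\mathcal D_{k,2}=[ka+(k-1)b+1:k(a+b)]$, $\mathcal D_{k,3}=\mathcal D_{\langle k+1\rangle_K,1}$, and $\mathcal D_k=\mathcal D_{k,1}\cup\mathcal D_{k,2}\cup\mathcal D_{k,3}$. A scheme consists of: placement functions $Z_k=\phi_k(W_1,\dots,W_N)\in\{0,1\}^{MB}$, chosen without knowledge of demands; for every demand vector $\mathbf d=(d_1,\dots,d_K)\in\mathcal D_1\times\cdots\times\mathcal D_K$, a transmitted message $X=\psi(\mathbf d,W_1,\dots,W_N)\in\{0,1\}^{RB}$; and decoding functions such that user $k$ recovers $W_{d_k}$ exactly from $(\mathbf d,Z_k,X)$ for every $\mathbf d$ and $k$. $R$ is the worst-case load and $R^\star$ is the infimum of $R$ over all schemes (and all $B$). *)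

theory Defs
  imports Complex_Main
begin

(* <c>_m : the unique element of {1..m} congruent to c modulo m (m >= 1) *)
definition modpos :: "int \<Rightarrow> nat \<Rightarrow> nat" where
  "modpos c m = nat ((c - 1) mod int m) + 1"

definition Dk1 :: "nat \<Rightarrow> nat \<Rightarrow> nat \<Rightarrow> nat set" where
  "Dk1 a b k = {(k-1)*(a+b)+1 .. k*a+(k-1)*b}"

definition Dk2 :: "nat \<Rightarrow> nat \<Rightarrow> nat \<Rightarrow> nat set" where
  "Dk2 a b k = {k*a+(k-1)*b+1 .. k*(a+b)}"

definition Dk3 :: "nat \<Rightarrow> nat \<Rightarrow> nat \<Rightarrow> nat \<Rightarrow> nat set" where
  "Dk3 K a b k = Dk1 a b (modpos (int k + 1) K)"

definition Dk :: "nat \<Rightarrow> nat \<Rightarrow> nat \<Rightarrow> nat \<Rightarrow> nat set" where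
  "Dk K a b k = Dk1 a b k \<union> Dk2 a b k \<union> Dk3 K a b k"

definition libraries :: "nat \<Rightarrow> nat \<Rightarrow> nat \<Rightarrow> nat \<Rightarrow> (nat \<Rightarrow> bool list) set" where
  "libraries K a b B = {W. \<forall>n\<in>{1..K*(a+b)}. length (W n) = B}"

definition demands :: "nat \<Rightarrow> nat \<Rightarrow> nat \<Rightarrow> (nat \<Rightarrow> nat) set" where
  "demands K a b = {d. \<forall>k\<in>{1..K}. d k \<in> Dk K a b k}"

(* A scheme with file size B (bits), cache size mc \<le> M B bits and
   transmitted message of L bits (load R = L/B) exists. *)
definition achievable :: "nat \<Rightarrow> nat \<Rightarrow> nat \<Rightarrow> real \<Rightarrow> nat \<Rightarrow> nat \<Rightarrow> bool" where
  "achievable K a b M B L \<longleftrightarrow> B > 0 \<and>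
     (\<exists>(mc::nat) (phi :: nat \<Rightarrow> (nat \<Rightarrow> bool list) \<Rightarrow> bool list)
        (psi :: (nat \<Rightarrow> nat) \<Rightarrow> (nat \<Rightarrow> bool list) \<Rightarrow> bool list)
        (dec :: nat \<Rightarrow> (nat \<Rightarrow> nat) \<Rightarrow> bool list \<Rightarrow> bool list \<Rightarrow> bool list).
        real mc \<le> M * real B \<and>
        (\<forall>k\<in>{1..K}. \<forall>W\<in>libraries K a b B. length (phi k W) = mc) \<and>
        (\<forall>d\<in>demands K a b. \<forall>W\<in>libraries K a b B.
            length (psi d W) = L \<and>
            (\<forall>k\<in>{1..K}. dec k d (phi k W) (psi d W) = W (d k))))"

definition Rstar :: "nat \<Rightarrow> nat \<Rightarrow> nat \<Rightarrow> real \<Rightarrow> real" where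
  "Rstar K a b M = Inf {real L / real B | B L. achievable K a b M B L}"

end

theory Submission
  imports Defs "HOL-Library.FuncSet"
begin

lemma card_bl: "card {xs::bool list. length xs = n} = 2^n"
  using card_lists_length_eq[of "UNIV::bool set" n] by simp

lemma fin_bl: "finite {xs::bool list. length xs = n}"
  using finite_lists_length_eq[of "UNIV::bool set" n] by simp

lemma modpos_in: "K \<ge> 1 \<Longrightarrow> modpos c K \<in> {1..K}"
proof -
  assume "K \<ge> 1"
  then have "(c - 1) mod int K < int K" "0 \<le> (c - 1) mod int K" by auto
  then show ?thesis unfolding modpos_def by auto
qed

lemma Dk1_sub: "k \<in> {1..K} \<Longrightarrow> Dk1 a b k \<subseteq> {1..K*(a+b)}"
proof -
  assume k: "k \<in> {1..K}"
  then obtain m where m: "k = Suc m" by (cases k) auto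
  have "Suc m * (a+b) \<le> K*(a+b)" using k m by (intro mult_le_mono1) auto
  then show ?thesis using m unfolding Dk1_def by (auto simp: algebra_simps)
qed

lemma Dk2_sub: "k \<in> {1..K} \<Longrightarrow> Dk2 a b k \<subseteq> {1..K*(a+b)}"
proof -
  assume k: "k \<in> {1..K}"
  then obtain m where m: "k = Suc m" by (cases k) auto
  have "Suc m * (a+b) \<le> K*(a+b)" using k m by (intro mult_le_mono1) auto
  then show ?thesis using m unfolding Dk2_def by (auto simp: algebra_simps)
qed

lemma Dk_sub: "k \<in> {1..K} \<Longrightarrow> Dk K a b k \<subseteq> {1..K*(a+b)}"
proof -
  assume k: "k \<in> {1..K}"
  then have "modpos (int k + 1) K \<in> {1..K}" by (intro modpos_in) auto
  then show ?thesis unfolding Dk_def Dk3_def using Dk1_sub[OF k] Dk2_sub[OF k] Dk1_sub by blast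
qed

lemma hd_single: "length xs = 1 \<Longrightarrow> [hd xs] = xs"
  by (cases xs) auto

lemma nonempty: "K \<ge> 1 \<Longrightarrow> M \<ge> 0 \<Longrightarrow> achievable K a b M 1 K"
proof -
  assume K: "K \<ge> 1" "M \<ge> 0"
  have P: "\<forall>d\<in>demands K a b. \<forall>W\<in>libraries K a b 1.
      length (map (\<lambda>k. hd (W (d k))) [1..<K + 1]) = K \<and>
      (\<forall>k\<in>{1..K}. [map (\<lambda>k. hd (W (d k))) [1..<K + 1] ! (k - 1)] = W (d k))"
  proof (intro ballI conjI)
    fix d W k assume d: "d \<in> demands K a b" and W: "W \<in> libraries K a b 1" and k: "k \<in> {1..K}"
    have "d k \<in> {1..K*(a+b)}" proof -
      have "d k \<in> Dk K a b k" using d k unfolding demands_def by blast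
      then show ?thesis using Dk_sub[OF k, of a b] by blast
    qed
    then have "length (W (d k)) = 1" using W unfolding libraries_def by auto
    moreover have "map (\<lambda>k. hd (W (d k))) [1..<K + 1] ! (k - 1) = hd (W (d k))"
    proof -
      have k1: "1 \<le> k" "k \<le> K" using k by auto
      then have "k - 1 < K" by linarith
      then have "k - 1 < length [1..<K+1]" by (simp only: length_upt)
      then have "map (\<lambda>k. hd (W (d k))) [1..<K + 1] ! (k - 1) = hd (W (d ([1..<K+1] ! (k-1))))"
        by (rule nth_map)
      moreover have "[1..<K+1] ! (k-1) = 1 + (k-1)" by (rule nth_upt) (use k1 in linarith)
      moreover have "1 + (k - 1) = k" using k1 by linarith
      ultimately show ?thesis by (simp only:)
    qed
    ultimately show "[map (\<lambda>k. hd (W (d k))) [1..<K + 1] ! (k - 1)] = W (d k)"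
      using hd_single[of "W (d k)"] by (simp only:)
  qed simp
  show ?thesis unfolding achievable_def
    apply (rule conjI, simp)
    apply (rule exI[of _ 0], rule exI[of _ "\<lambda>k W. []"],
      rule exI[of _ "\<lambda>d W. map (\<lambda>k. hd (W (d k))) [1..<K+1]"],
      rule exI[of _ "\<lambda>k d z X. [X ! (k-1)]"])
    using P K by simp
qed



lemma key:
  assumes ach: "achievable K a b M B L" and K2: "K \<ge> 2" and Ke: "even K"
    and a1: "a \<ge> 1" and b1: "b \<ge> 1"
  shows "real K / 2 - real K / (2 * (2 * real a + real b)) * M \<le> real L / real B"
proof -
  obtain mc :: nat and phi :: "nat \<Rightarrow> (nat \<Rightarrow> bool list) \<Rightarrow> bool list"
    and psi :: "(nat \<Rightarrow> nat) \<Rightarrow> (nat \<Rightarrow> bool list) \<Rightarrow> bool list"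
    and dec :: "nat \<Rightarrow> (nat \<Rightarrow> nat) \<Rightarrow> bool list \<Rightarrow> bool list \<Rightarrow> bool list" where B0: "B > 0" and mcM: "real mc \<le> M * real B"
    and phiL: "\<forall>k\<in>{1..K}. \<forall>W\<in>libraries K a b B. length (phi k W) = mc"
    and psiD: "\<forall>d\<in>demands K a b. \<forall>W\<in>libraries K a b B.
            length (psi d W) = L \<and>
            (\<forall>k\<in>{1..K}. dec k d (phi k W) (psi d W) = W (d k))"
    using ach unfolding achievable_def by (elim conjE exE) blast
  define h where "h = K div 2"
  define t where "t = 2*a+b"
  have Kh: "K = 2*h" using Ke unfolding h_def by auto
  define g where "g = (\<lambda>(i::nat,r::nat). 2*i*(a+b)+1+r)"
  define S where "S = g ` ({..<h} \<times> {..<t})"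
  have ginj: "inj_on g ({..<h} \<times> {..<t})"
  proof (rule inj_onI)
    fix x y assume x: "x \<in> {..<h} \<times> {..<t}" and y: "y \<in> {..<h} \<times> {..<t}" and e0: "g x = g y"
    obtain i r where xd: "x = (i,r)" by fastforce
    obtain i' r' where yd: "y = (i',r')" by fastforce
    have r: "r \<in> {..<t}" "r' \<in> {..<t}" using x y xd yd by auto
    have e: "g (i,r) = g (i',r')" using e0 xd yd by simp
    define c where "c = 2*(a+b)"
    have c0: "c > 0" using a1 unfolding c_def by auto
    have e2: "c*i + r = c*i' + r'" using e unfolding g_def c_def by (simp add: algebra_simps)
    have rc: "r < c" "r' < c" using r unfolding c_def t_def by auto
    have "(c*i + r) div c = i" using rc c0 by simp
    moreover have "(c*i' + r') div c = i'" using rc c0 by simp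
    ultimately have "i = i'" using e2 by simp
    then show "x = y" using e2 xd yd by simp
  qed
  have cardS: "card S = h*t" unfolding S_def using card_image[OF ginj] by simp
  have finS: "finite S" unfolding S_def by simp
  have Srange: "S \<subseteq> {1..K*(a+b)}"
  proof
    fix n assume "n \<in> S"
    then obtain i r where ir: "i < h" "r < t" "n = 2*i*(a+b)+1+r" unfolding S_def g_def by auto
    have "2*(i+1)*(a+b) \<le> K*(a+b)" using ir Kh by (intro mult_le_mono1) auto
    then show "n \<in> {1..K*(a+b)}" using ir unfolding t_def by (auto simp: algebra_simps)
  qed
  define dd where "dd = (\<lambda>j k. if odd k then (k-1)*(a+b)+1+j else (k-1)*(a+b)+(1::nat))"
  have ddD: "dd j \<in> demands K a b" if j: "j < t" for j
    unfolding demands_def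
  proof (intro CollectI ballI)
    fix k assume k: "k \<in> {1..K}"
    then obtain m where m: "k = Suc m" by (cases k) auto
    show "dd j k \<in> Dk K a b k"
    proof (cases "odd k")
      case True
      have "k < K" using True k Ke by (metis atLeastAtMost_iff le_neq_implies_less)
      then have mp: "modpos (int k + 1) K = Suc k" unfolding modpos_def by simp
      show ?thesis
      proof (cases "j < a+b")
        case True2: True
        then have "dd j k \<in> Dk1 a b k \<union> Dk2 a b k"
          using True m unfolding dd_def Dk1_def Dk2_def by (auto simp: algebra_simps)
        then show ?thesis unfolding Dk_def by blast
      next
        case False
        then have "dd j k \<in> Dk1 a b (Suc k)"
          using True m j unfolding dd_def Dk1_def t_def by (auto simp: algebra_simps)
        then show ?thesis unfolding Dk_def Dk3_def mp by blast
      qed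
    next
      case False
      then have "dd j k \<in> Dk1 a b k" using m a1 unfolding dd_def Dk1_def by (auto simp: algebra_simps)
      then show ?thesis unfolding Dk_def by blast
    qed
  qed
  define Lb where "Lb = {xs::bool list. length xs = B}"
  define P where "P = PiE S (\<lambda>_. Lb)"
  define ext where "ext = (\<lambda>f n. if n \<in> S then f n else replicate B False)"
  have extL: "ext f \<in> libraries K a b B" if "f \<in> P" for f
    using that Srange unfolding libraries_def ext_def P_def Lb_def by (auto simp: PiE_iff)
  define us where "us = map (\<lambda>i. 2*i+1) [0..<h]"
  define E where "E = (\<lambda>W. (map (\<lambda>k. phi k W) us, map (\<lambda>j. psi (dd j) W) [0..<t]))"
  define T where "T = {xss. set xss \<subseteq> {xs::bool list. length xs = mc} \<and> length xss = h}
     \<times> {xss. set xss \<subseteq> {xs::bool list. length xs = L} \<and> length xss = t}"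
  have finT: "finite T" unfolding T_def
    by (intro finite_cartesian_product finite_lists_length_eq) (simp_all add: fin_bl)
  have cardT: "card T = (2^mc)^h * (2^L)^t"
    unfolding T_def card_cartesian_product
    by (simp add: card_lists_length_eq fin_bl card_bl)
  have usK: "u \<in> {1..K}" if "u \<in> set us" for u
    using that Kh unfolding us_def by auto
  have img: "(E \<circ> ext) ` P \<subseteq> T"
  proof
    fix y assume "y \<in> (E \<circ> ext) ` P"
    then obtain f where f: "f \<in> P" "y = E (ext f)" by auto
    have "set (map (\<lambda>k. phi k (ext f)) us) \<subseteq> {xs. length xs = mc}"
      using phiL extL[OF f(1)] usK by auto
    moreover have "set (map (\<lambda>j. psi (dd j) (ext f)) [0..<t]) \<subseteq> {xs. length xs = L}"
      using psiD extL[OF f(1)] ddD by auto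
    ultimately show "y \<in> T" unfolding T_def f(2) E_def us_def by simp
  qed
  have inj: "inj_on (E \<circ> ext) P"
  proof (rule inj_onI)
    fix f f' assume f: "f \<in> P" and f': "f' \<in> P" and e: "(E \<circ> ext) f = (E \<circ> ext) f'"
    have e1: "map (\<lambda>k. phi k (ext f)) us = map (\<lambda>k. phi k (ext f')) us"
      and e2: "map (\<lambda>j. psi (dd j) (ext f)) [0..<t] = map (\<lambda>j. psi (dd j) (ext f')) [0..<t]"
      using e unfolding E_def by auto
    show "f = f'"
    proof (rule PiE_ext[OF f[unfolded P_def] f'[unfolded P_def]])
      fix n assume n: "n \<in> S"
      then obtain i r where ir: "i < h" "r < t" "n = 2*i*(a+b)+1+r" unfolding S_def g_def by auto
      define u where "u = 2*i+1"
      have uK: "u \<in> {1..K}" using ir Kh unfolding u_def by auto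
      have "phi u (ext f) = phi u (ext f')"
        using arg_cong[OF e1, of "\<lambda>xs. xs ! i"] ir unfolding us_def u_def by simp
      moreover have "psi (dd r) (ext f) = psi (dd r) (ext f')"
        using arg_cong[OF e2, of "\<lambda>xs. xs ! r"] ir by simp
      moreover have "dd r u = n" unfolding dd_def u_def ir(3) by (simp add: algebra_simps)
      moreover have "ext f (dd r u) = dec u (dd r) (phi u (ext f)) (psi (dd r) (ext f))"
        using psiD ddD[OF ir(2)] extL[OF f] uK by auto
      moreover have "ext f' (dd r u) = dec u (dd r) (phi u (ext f')) (psi (dd r) (ext f'))"
        using psiD ddD[OF ir(2)] extL[OF f'] uK by auto
      ultimately have "ext f n = ext f' n" by simp
      then show "f n = f' n" using n unfolding ext_def by simp
    qed
  qed
  have cardP: "card P = (2^B)^(h*t)"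
    unfolding P_def using finS cardS by (simp add: card_PiE Lb_def card_bl)
  have "card P \<le> card T" using card_inj_on_le[OF inj img finT] .
  then have "(2::nat)^(B*(h*t)) \<le> 2^(mc*h + L*t)"
    unfolding cardP cardT by (simp add: power_mult power_add)
  then have ineq: "B*(h*t) \<le> mc*h + L*t" by simp
  have t0: "real t > 0" using a1 unfolding t_def by simp
  have rK: "real K / 2 = real h" using Kh by simp
  have rt: "2 * real a + real b = real t" unfolding t_def by simp
  have ineqR: "real B * real h * real t \<le> real mc * real h + real L * real t"
    using ineq by (metis (mono_tags) of_nat_add of_nat_le_iff of_nat_mult mult.assoc)
  have "real mc * real h \<le> M * real B * real h" using mcM by (simp add: mult_right_mono)
  then have i2: "real B * real h * real t - M * real B * real h \<le> real L * real t" using ineqR by linarith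
  have B0r: "real B > 0" using B0 by simp
  have "real h - real h / real t * M = (real B * real h * real t - M * real B * real h) / (real B * real t)"
    using B0r t0 by (simp add: field_simps)
  also have "\<dots> \<le> real L * real t / (real B * real t)"
    using i2 B0r t0 by (intro divide_right_mono) auto
  also have "\<dots> = real L / real B" using t0 by simp
  finally have "real h - real h / real t * M \<le> real L / real B" .
  moreover have "real K / (2 * (2 * real a + real b)) = real h / real t" using rK rt by simp
  ultimately show ?thesis using rK by simp
qed

theorem mainTheorem4:

  fixes K a b :: nat and M :: real
  assumes "K \<ge> 2" and "even K" and "a \<ge> 1" and "b \<ge> 1" and "M \<ge> 0"
  shows "Rstar K a b M \<ge> real K / 2 - real K / (2 * (2 * real a + real b)) * M"
  unfolding Rstar_def
proof (rule cInf_greatest)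
  show "{real L / real B |B L. achievable K a b M B L} \<noteq> {}"
    using nonempty[of K M a b] assms by fastforce
  show "\<And>x. x \<in> {real L / real B |B L. achievable K a b M B L} \<Longrightarrow>
    real K / 2 - real K / (2 * (2 * real a + real b)) * M \<le> x"
    using key assms by blast
qed

end
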